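(* Let $\mathrm{VFS}$, $\mathrm{CPS}$, the negative translation ($V^{\sim}$, $M^{\wr}$, $M^{-}$) and the inverse translation ($P^{+}$, $M^{\times}$, $V^{\times\times}$) be as in the context. Then: (1) for all terms $M$ and values $V$ of $\mathrm{VFS}$, $(M^{-})^{+}=M$, $(M^{\wr})^{\times}=M$ and $(V^{\sim})^{\times\times}=V$; (2) for all terms $P$, commands $M$ and values $V$ of $\mathrm{CPS}$, $(P^{+})^{-}=P$, $(M^{\times})^{\wr}=M$ and $(V^{\times\times})^{\sim}=V$; (3) if $M_1\to M_2$ in $\mathrm{VFS}$ then $M_1^{\wr}\to M_2^{\wr}$ in $\mathrm{CPS}$ (hence $M_1^{-}\to M_2^{-}$ in $\mathrm{CPS}$); (4) if $M_1\to M_2$ for commands in $\mathrm{CPS}$ then $M_1^{\times}\to M_2^{\times}$ in $\mathrm{VFS}$; hence if $P_1\to P_2$ for terms in $\mathrm{CPS}$ then $P_1^{+}\to P_2^{+}$ in $\mathrm{VFS}$.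
   Context: Terms are considered up to $\alpha$-conversion; $[V/x]$ and $[K/k]$ denote capture-avoiding substitution; $\to$ denotes one-step reduction, i.e. the closure of the listed rules under all constructors. $\mathrm{VFS}$: terms $M,N::=\uparrow V\mid \mathsf{C}_v(V,c)$; values $V,W::=x\mid\lambda x.M$; formal contexts $c::= x.M\mid (W,x.M)$ ($x$ bound in $M$). Auxiliary operation: $\mathsf{C}_v(\uparrow V:c')=\mathsf{C}_v(V,c')$, $\mathsf{C}_v(\mathsf{C}_v(V,c):c')=\mathsf{C}_v(V,(c:c'))$, $((x.M):c')=x.\mathsf{C}_v(M:c')$, $((W,x.M):c')=(W,x.\mathsf{C}_v(M:c'))$. Rules: $(B_v)$ $\mathsf{C}_v(\lambda x.M,(V,y.N))\to \mathsf{C}_v(V,x.\mathsf{C}_v(M:y.N))$; $(\sigma_v)$ $\mathsf{C}_v(V,y.N)\to [V/y]N$. $\mathrm{CPS}$ (with a fixed distinguished covariable $k$): commands $M,N::= kV\mid KV\mid VWK$; continuations $K::=\lambda x.M$; values $V,W::=\lambda x.P\mid x$; terms $P::=\lambda k.M$. Rules: $(\sigma_v)$ $(\lambda x.M)V\to[V/x]M$; $(B_v)$ $(\lambda x.\lambda k.M)WK\to(\lambda x.[K/k]M)W$. Negative translation: $x^{\sim}=x$; $(\lambda x.M)^{\sim}=\lambda x.M^{-}$; $M^{-}=\lambda k.M^{\wr}$; $(\uparrow V)^{\wr}=kV^{\sim}$; $\mathsf{C}_v(V,x.M)^{\wr}=(\lambda x.M^{\wr})V^{\sim}$; $\mathsf{C}_v(V,(W,x.M))^{\wr}=V^{\sim}W^{\sim}(\lambda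 x.M^{\wr})$. Inverse translation: $(\lambda k.M)^{+}=M^{\times}$; $(kV)^{\times}=\uparrow(V^{\times\times})$; $((\lambda x.M)V)^{\times}=\mathsf{C}_v(V^{\times\times},x.M^{\times})$; $(VW(\lambda x.M))^{\times}=\mathsf{C}_v(V^{\times\times},(W^{\times\times},x.M^{\times}))$; $x^{\times\times}=x$; $(\lambda x.P)^{\times\times}=\lambda x.P^{+}$. *)

theory Defs
  imports Main
begin

text \<open>Terms are represented with de Bruijn indices for value variables, so that
  terms are identified up to alpha-conversion and substitution is capture-avoiding
  by construction.  The single CPS covariable k needs no index: an occurrence of k
  always refers to the nearest enclosing binder lambda k.\<close>

datatype vtm =
    VRet vval
  | VCut vval vctx
and vval =
    VVar nat
  | VLam vtm             \<comment> \<open>lambda x. M\<close>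
and vctx =
    VAbs vtm             \<comment> \<open>x.M\<close>
  | VArg vval vtm        \<comment> \<open>(W, x.M)\<close>

fun vlift_tm :: "nat \<Rightarrow> vtm \<Rightarrow> vtm"
and vlift_val :: "nat \<Rightarrow> vval \<Rightarrow> vval"
and vlift_ctx :: "nat \<Rightarrow> vctx \<Rightarrow> vctx" where
  "vlift_tm c (VRet V) = VRet (vlift_val c V)"
| "vlift_tm c (VCut V k) = VCut (vlift_val c V) (vlift_ctx c k)"
| "vlift_val c (VVar i) = VVar (if i < c then i else Suc i)"
| "vlift_val c (VLam M) = VLam (vlift_tm (Suc c) M)"
| "vlift_ctx c (VAbs M) = VAbs (vlift_tm (Suc c) M)"
| "vlift_ctx c (VArg W M) = VArg (vlift_val c W) (vlift_tm (Suc c) M)"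

text \<open>vsubst_tm j U N substitutes U for the variable with index j in N
  (and lowers the indices above j): this is [U/x]N when x is bound at j.\<close>
fun vsubst_tm :: "nat \<Rightarrow> vval \<Rightarrow> vtm \<Rightarrow> vtm"
and vsubst_val :: "nat \<Rightarrow> vval \<Rightarrow> vval \<Rightarrow> vval"
and vsubst_ctx :: "nat \<Rightarrow> vval \<Rightarrow> vctx \<Rightarrow> vctx" where
  "vsubst_tm j U (VRet V) = VRet (vsubst_val j U V)"
| "vsubst_tm j U (VCut V k) = VCut (vsubst_val j U V) (vsubst_ctx j U k)"
| "vsubst_val j U (VVar i) = (if i < j then VVar i else if i = j then U else VVar (i - 1))"
| "vsubst_val j U (VLam M) = VLam (vsubst_tm (Suc j) (vlift_val 0 U) M)"
| "vsubst_ctx j U (VAbs M) = VAbs (vsubst_tm (Suc j) (vlift_val 0 U) M)"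
| "vsubst_ctx j U (VArg W M) = VArg (vsubst_val j U W) (vsubst_tm (Suc j) (vlift_val 0 U) M)"

fun vapp_tm :: "vtm \<Rightarrow> vctx \<Rightarrow> vtm"
and vapp_ctx :: "vctx \<Rightarrow> vctx \<Rightarrow> vctx" where
  "vapp_tm (VRet V) c' = VCut V c'"
| "vapp_tm (VCut V c) c' = VCut V (vapp_ctx c c')"
| "vapp_ctx (VAbs M) c' = VAbs (vapp_tm M (vlift_ctx 0 c'))"
| "vapp_ctx (VArg W M) c' = VArg W (vapp_tm M (vlift_ctx 0 c'))"

inductive vstep_tm :: "vtm \<Rightarrow> vtm \<Rightarrow> bool"
and vstep_val :: "vval \<Rightarrow> vval \<Rightarrow> bool"
and vstep_ctx :: "vctx \<Rightarrow> vctx \<Rightarrow> bool" where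
  vBv: "vstep_tm (VCut (VLam M) (VArg V N)) (VCut V (VAbs (vapp_tm M (vlift_ctx 0 (VAbs N)))))"
| vsigma: "vstep_tm (VCut V (VAbs N)) (vsubst_tm 0 V N)"
| vRet: "vstep_val V V' \<Longrightarrow> vstep_tm (VRet V) (VRet V')"
| vCut1: "vstep_val V V' \<Longrightarrow> vstep_tm (VCut V c) (VCut V' c)"
| vCut2: "vstep_ctx c c' \<Longrightarrow> vstep_tm (VCut V c) (VCut V c')"
| vLam: "vstep_tm M M' \<Longrightarrow> vstep_val (VLam M) (VLam M')"
| vAbs: "vstep_tm M M' \<Longrightarrow> vstep_ctx (VAbs M) (VAbs M')"
| vArg1: "vstep_val W W' \<Longrightarrow> vstep_ctx (VArg W M) (VArg W' M)"
| vArg2: "vstep_tm M M' \<Longrightarrow> vstep_ctx (VArg W M) (VArg W M')"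

datatype ccmd =
    CRet cval              \<comment> \<open>k V\<close>
  | CCont ccnt cval        \<comment> \<open>K V\<close>
  | CApp cval cval ccnt    \<comment> \<open>V W K\<close>
and ccnt =
    CK ccmd                \<comment> \<open>lambda x. M\<close>
and cval =
    CVar nat
  | CLam cterm             \<comment> \<open>lambda x. P\<close>
and cterm =
    CP ccmd                \<comment> \<open>lambda k. M\<close>

fun clift_cmd :: "nat \<Rightarrow> ccmd \<Rightarrow> ccmd"
and clift_cnt :: "nat \<Rightarrow> ccnt \<Rightarrow> ccnt"
and clift_val :: "nat \<Rightarrow> cval \<Rightarrow> cval"
and clift_term :: "nat \<Rightarrow> cterm \<Rightarrow> cterm" where
  "clift_cmd c (CRet V) = CRet (clift_val c V)"
| "clift_cmd c (CCont K V) = CCont (clift_cnt c K) (clift_val c V)"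
| "clift_cmd c (CApp V W K) = CApp (clift_val c V) (clift_val c W) (clift_cnt c K)"
| "clift_cnt c (CK M) = CK (clift_cmd (Suc c) M)"
| "clift_val c (CVar i) = CVar (if i < c then i else Suc i)"
| "clift_val c (CLam P) = CLam (clift_term (Suc c) P)"
| "clift_term c (CP M) = CP (clift_cmd c M)"

fun csubst_cmd :: "nat \<Rightarrow> cval \<Rightarrow> ccmd \<Rightarrow> ccmd"
and csubst_cnt :: "nat \<Rightarrow> cval \<Rightarrow> ccnt \<Rightarrow> ccnt"
and csubst_val :: "nat \<Rightarrow> cval \<Rightarrow> cval \<Rightarrow> cval"
and csubst_term :: "nat \<Rightarrow> cval \<Rightarrow> cterm \<Rightarrow> cterm" where
  "csubst_cmd j U (CRet V) = CRet (csubst_val j U V)"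
| "csubst_cmd j U (CCont K V) = CCont (csubst_cnt j U K) (csubst_val j U V)"
| "csubst_cmd j U (CApp V W K) = CApp (csubst_val j U V) (csubst_val j U W) (csubst_cnt j U K)"
| "csubst_cnt j U (CK M) = CK (csubst_cmd (Suc j) (clift_val 0 U) M)"
| "csubst_val j U (CVar i) = (if i < j then CVar i else if i = j then U else CVar (i - 1))"
| "csubst_val j U (CLam P) = CLam (csubst_term (Suc j) (clift_val 0 U) P)"
| "csubst_term j U (CP M) = CP (csubst_cmd j U M)"

text \<open>[K/k]M: replaces the free occurrences of the covariable k in the command M.
  Values contain no free k (their k is bound by their own lambda k).\<close>
fun ksubst_cmd :: "ccnt \<Rightarrow> ccmd \<Rightarrow> ccmd" where
  "ksubst_cmd K (CRet V) = CCont K V"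
| "ksubst_cmd K (CCont (CK M) V) = CCont (CK (ksubst_cmd (clift_cnt 0 K) M)) V"
| "ksubst_cmd K (CApp V W (CK M)) = CApp V W (CK (ksubst_cmd (clift_cnt 0 K) M))"

inductive cstep_cmd :: "ccmd \<Rightarrow> ccmd \<Rightarrow> bool"
and cstep_cnt :: "ccnt \<Rightarrow> ccnt \<Rightarrow> bool"
and cstep_val :: "cval \<Rightarrow> cval \<Rightarrow> bool"
and cstep_term :: "cterm \<Rightarrow> cterm \<Rightarrow> bool" where
  csigma: "cstep_cmd (CCont (CK M) V) (csubst_cmd 0 V M)"
| cBv: "cstep_cmd (CApp (CLam (CP M)) W K) (CCont (CK (ksubst_cmd (clift_cnt 0 K) M)) W)"
| cRet: "cstep_val V V' \<Longrightarrow> cstep_cmd (CRet V) (CRet V')"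
| cCont1: "cstep_cnt K K' \<Longrightarrow> cstep_cmd (CCont K V) (CCont K' V)"
| cCont2: "cstep_val V V' \<Longrightarrow> cstep_cmd (CCont K V) (CCont K V')"
| cApp1: "cstep_val V V' \<Longrightarrow> cstep_cmd (CApp V W K) (CApp V' W K)"
| cApp2: "cstep_val W W' \<Longrightarrow> cstep_cmd (CApp V W K) (CApp V W' K)"
| cApp3: "cstep_cnt K K' \<Longrightarrow> cstep_cmd (CApp V W K) (CApp V W K')"
| cK: "cstep_cmd M M' \<Longrightarrow> cstep_cnt (CK M) (CK M')"
| cLam: "cstep_term P P' \<Longrightarrow> cstep_val (CLam P) (CLam P')"
| cP: "cstep_cmd M M' \<Longrightarrow> cstep_term (CP M) (CP M')"

fun neg_wr :: "vtm \<Rightarrow> ccmd"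
and neg_val :: "vval \<Rightarrow> cval" where
  "neg_wr (VRet V) = CRet (neg_val V)"
| "neg_wr (VCut V (VAbs M)) = CCont (CK (neg_wr M)) (neg_val V)"
| "neg_wr (VCut V (VArg W M)) = CApp (neg_val V) (neg_val W) (CK (neg_wr M))"
| "neg_val (VVar x) = CVar x"
| "neg_val (VLam M) = CLam (CP (neg_wr M))"

definition neg_tm :: "vtm \<Rightarrow> cterm" where
  "neg_tm M = CP (neg_wr M)"

fun inv_cmd :: "ccmd \<Rightarrow> vtm"
and inv_val :: "cval \<Rightarrow> vval"
and inv_term :: "cterm \<Rightarrow> vtm" where
  "inv_term (CP M) = inv_cmd M"
| "inv_cmd (CRet V) = VRet (inv_val V)"
| "inv_cmd (CCont (CK M) V) = VCut (inv_val V) (VAbs (inv_cmd M))"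
| "inv_cmd (CApp V W (CK M)) = VCut (inv_val V) (VArg (inv_val W) (inv_cmd M))"
| "inv_val (CVar x) = VVar x"
| "inv_val (CLam P) = VLam (inv_term P)"

end

theory Submission
  imports Defs
begin

lemma inv_neg: "inv_cmd (neg_wr M) = M" "inv_val (neg_val V) = V"
  by (induction M and V rule: neg_wr_neg_val.induct) auto

lemma neg_inv: "neg_wr (inv_cmd M) = M" "neg_val (inv_val V) = V" "neg_tm (inv_term P) = P"
  by (induction M and V and P rule: inv_cmd_inv_val_inv_term.induct) (auto simp: neg_tm_def)

lemma neg_inv_tm: "CP (neg_wr (inv_term P)) = P"
  by (cases P) (simp add: neg_inv)

lemma neg_lift: "neg_wr (vlift_tm c M) = clift_cmd c (neg_wr M)"
  "neg_val (vlift_val c V) = clift_val c (neg_val V)"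
  by (induction M and V arbitrary: c and c rule: neg_wr_neg_val.induct) auto

lemma neg_subst: "neg_wr (vsubst_tm j U M) = csubst_cmd j (neg_val U) (neg_wr M)"
  "neg_val (vsubst_val j U V) = csubst_val j (neg_val U) (neg_val V)"
  by (induction M and V arbitrary: j U and j U rule: neg_wr_neg_val.induct) (auto simp: neg_lift)

lemma neg_app: "neg_wr (vapp_tm M (VAbs N)) = ksubst_cmd (CK (neg_wr N)) (neg_wr M)"
  "neg_val (V::vval) = neg_val V"
  by (induction M and V arbitrary: N and N rule: neg_wr_neg_val.induct) (auto simp: neg_lift)

lemma inv_lift: "inv_cmd (clift_cmd c M) = vlift_tm c (inv_cmd M)"
  by (metis inv_neg(1) neg_inv(1) neg_lift(1))

lemma inv_lift_val: "inv_val (clift_val c V) = vlift_val c (inv_val V)"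
  by (metis inv_neg(2) neg_inv(2) neg_lift(2))

lemma inv_subst: "inv_cmd (csubst_cmd j U M) = vsubst_tm j (inv_val U) (inv_cmd M)"
  by (metis inv_neg(1) neg_inv(1) neg_inv(2) neg_subst(1))

lemma inv_app: "inv_cmd (ksubst_cmd (CK N) M) = vapp_tm (inv_cmd M) (VAbs (inv_cmd N))"
  by (metis inv_neg(1) neg_inv(1) neg_app(1))

lemma step3:
  "vstep_tm M1 M2 \<Longrightarrow> cstep_cmd (neg_wr M1) (neg_wr M2)"
  "vstep_val V1 V2 \<Longrightarrow> cstep_val (neg_val V1) (neg_val V2)"
  "vstep_ctx c1 c2 \<Longrightarrow> \<forall>V. cstep_cmd (neg_wr (VCut V c1)) (neg_wr (VCut V c2))"
proof (induction rule: vstep_tm_vstep_val_vstep_ctx.inducts)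
  case (vBv M V N)
  have e: "neg_wr (vapp_tm M (vlift_ctx 0 (VAbs N))) = ksubst_cmd (clift_cnt 0 (CK (neg_wr N))) (neg_wr M)"
    by (simp only: vlift_ctx.simps neg_app clift_cnt.simps neg_lift)
  show ?case using cBv[of "neg_wr M" "neg_val V" "CK (neg_wr N)"]
    by (simp only: neg_wr.simps neg_val.simps e)
next
  case (vsigma V N)
  then show ?case by (simp only: neg_subst neg_wr.simps neg_val.simps csigma)
next
  case (vRet V V')
  then show ?case by (simp only: neg_wr.simps neg_val.simps cRet)
next
  case (vCut1 V V' c)
  then show ?case by (cases c) (simp_all only: neg_wr.simps neg_val.simps cCont2 cApp1)
next
  case (vCut2 c c' V)
  then show ?case by blast
next
  case (vLam M M')
  then show ?case by (simp only: neg_wr.simps neg_val.simps cLam cP)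
next
  case (vAbs M M')
  then show ?case by (simp only: neg_wr.simps neg_val.simps cCont1 cK simp_thms)
next
  case (vArg1 W W' M)
  then show ?case by (simp only: neg_wr.simps neg_val.simps cApp2 simp_thms)
next
  case (vArg2 M M' W)
  then show ?case by (simp only: neg_wr.simps neg_val.simps cApp3 cK simp_thms)
qed

lemma step4:
  "cstep_cmd M1 M2 \<Longrightarrow> vstep_tm (inv_cmd M1) (inv_cmd M2)"
  "cstep_cnt K1 K2 \<Longrightarrow> (\<forall>V. vstep_tm (inv_cmd (CCont K1 V)) (inv_cmd (CCont K2 V))) \<and>
      (\<forall>V W. vstep_tm (inv_cmd (CApp V W K1)) (inv_cmd (CApp V W K2)))"
  "cstep_val V1 V2 \<Longrightarrow> vstep_val (inv_val V1) (inv_val V2)"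
  "cstep_term P1 P2 \<Longrightarrow> vstep_tm (inv_term P1) (inv_term P2)"
proof (induction rule: cstep_cmd_cstep_cnt_cstep_val_cstep_term.inducts)
  case (csigma M V)
  then show ?case by (simp only: inv_subst inv_cmd.simps vsigma)
next
  case (cBv M W K)
  then show ?case
  proof (cases K)
    case (CK N)
    have e: "inv_cmd (ksubst_cmd (clift_cnt 0 (CK N)) M) = vapp_tm (inv_cmd M) (vlift_ctx 0 (VAbs (inv_cmd N)))"
      by (simp only: clift_cnt.simps inv_app inv_lift vlift_ctx.simps)
    show ?thesis using vBv[of "inv_cmd M" "inv_val W" "inv_cmd N"]
      by (simp only: CK e inv_cmd.simps inv_val.simps inv_term.simps)
  qed
next
  case (cRet V V')
  then show ?case by (simp only: inv_cmd.simps vRet)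
next
  case (cCont1 K K' V)
  then show ?case by blast
next
  case (cCont2 V V' K)
  then show ?case by (cases K) (simp only: inv_cmd.simps vCut1)
next
  case (cApp1 V V' W K)
  then show ?case by (cases K) (simp only: inv_cmd.simps vCut1)
next
  case (cApp2 W W' V K)
  then show ?case by (cases K) (simp only: inv_cmd.simps vCut2 vArg1)
next
  case (cApp3 K K' V W)
  then show ?case by blast
next
  case (cK M M')
  then show ?case by (simp only: inv_cmd.simps vCut2 vAbs vArg2 simp_thms)
next
  case (cLam P P')
  then show ?case by (simp only: inv_val.simps vLam)
next
  case (cP M M')
  then show ?case by (simp only: inv_term.simps)
qed

theorem theorem3:
  shows "(\<forall>M. inv_term (neg_tm M) = M) \<and> (\<forall>M. inv_cmd (neg_wr M) = M) \<and> (\<forall>V. inv_val (neg_val V) = V)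
    \<and> (\<forall>P. neg_tm (inv_term P) = P) \<and> (\<forall>M. neg_wr (inv_cmd M) = M) \<and> (\<forall>V. neg_val (inv_val V) = V)
    \<and> (\<forall>M1 M2. vstep_tm M1 M2 \<longrightarrow> cstep_cmd (neg_wr M1) (neg_wr M2) \<and> cstep_term (neg_tm M1) (neg_tm M2))
    \<and> (\<forall>M1 M2. cstep_cmd M1 M2 \<longrightarrow> vstep_tm (inv_cmd M1) (inv_cmd M2))
    \<and> (\<forall>P1 P2. cstep_term P1 P2 \<longrightarrow> vstep_tm (inv_term P1) (inv_term P2))"
proof (intro conjI allI impI)
  fix M1 M2 assume h: "vstep_tm M1 M2"
  show "cstep_cmd (neg_wr M1) (neg_wr M2)" using h by (rule step3(1))
  show "cstep_term (neg_tm M1) (neg_tm M2)" unfolding neg_tm_def using h by (intro cP step3(1))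
next
  fix M1 M2 assume "cstep_cmd M1 M2" then show "vstep_tm (inv_cmd M1) (inv_cmd M2)" by (rule step4(1))
next
  fix P1 P2 assume "cstep_term P1 P2" then show "vstep_tm (inv_term P1) (inv_term P2)" by (rule step4(4))
qed (simp_all only: neg_tm_def inv_term.simps inv_neg neg_inv neg_inv_tm)

end
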